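(* Let $g\in\mathbb{R}^n$ be nonzero, $H\in\mathbb{S}^n$, $\epsilon>0$, $\delta>0$, $\zeta\in(0,1)$, and let $k_{\max}$ be any iteration limit. The step $s$ returned by Algorithm 2 (described in the context) satisfies \[ g^Ts+\tfrac12 s^THs\ \le\ -\tfrac12\,\epsilon\,\|s\|^2 . \]
   Context: $\mathbb{S}^n$ is the set of real symmetric $n\times n$ matrices, $\|\cdot\|$ the Euclidean norm; all computations are in exact arithmetic. Algorithm 2 (truncated CG for $\min_s g^Ts+\tfrac12 s^T(H+2\epsilon I)s$ s.t. $\|s\|\le\delta$): inputs nonzero $g$, $H\in\mathbb{S}^n$, $\epsilon>0$, $\delta>0$, $\zeta\in(0,1)$, and an iteration limit $k_{\max}\le n$ (either $n$ or a smaller cap). Set $y_0=0$, $r_0=g$, $p_0=-g$, $j=0$. While $j<k_{\max}$: (a) if $p_j^T(H+2\epsilon I)p_j\le\epsilon\|p_j\|^2$, compute $\sigma\ge0$ with $\|y_j+\sigma p_j\|=\delta$ and return $s=y_j+\sigma p_j$ with flag BND-NEG; (b) set $\alpha_j=\|r_j\|^2/(p_j^T(H+2\epsilon I)p_j)$ and $y_{j+1}=y_j+\alpha_jp_j$; if $\|y_{j+1}\|\ge\delta$, compute $\sigma\ge0$ with $\|y_j+\sigma p_j\|=\delta$ and return $s=y_j+\sigma p_j$ with flag BND-NORM; (c) set $r_{j+1}=r_j+\alpha_j(H+2\epsilon I)p_j$; if $\|r_{j+1}\|\le\tfrac{\zeta}{2}\min\{\|g\|,\epsilon\|y_{j+1}\|\}$,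 return $s=y_{j+1}$ with flag INT-RES; (d) set $\beta_{j+1}=\|r_{j+1}\|^2/\|r_j\|^2$, $p_{j+1}=-r_{j+1}+\beta_{j+1}p_j$, $j\leftarrow j+1$. If the loop exits, return the current iterate $s=y_j$ with flag INT-MAX. *)

theory Defs
  imports "HOL-Analysis.Analysis"
begin

datatype cg_flag = BND_NEG | BND_NORM | INT_RES | INT_MAX

definition cg_boundary :: "real \<Rightarrow> real^'n \<Rightarrow> real^'n \<Rightarrow> real^'n" where
  "cg_boundary delta y p =
     y + (SOME \<sigma>. \<sigma> \<ge> 0 \<and> norm (y + \<sigma> *\<^sub>R p) = delta) *\<^sub>R p"

text \<open>The while loop of Algorithm 2; the first argument is the number of remaining
  iterations (k_max - j). Arguments: fuel, g, H, eps, delta, zeta, y_j, r_j, p_j.\<close>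
fun cg_loop :: "nat \<Rightarrow> real^'n \<Rightarrow> real^'n^'n \<Rightarrow> real \<Rightarrow> real \<Rightarrow> real
                 \<Rightarrow> real^'n \<Rightarrow> real^'n \<Rightarrow> real^'n \<Rightarrow> (real^'n) \<times> cg_flag" where
  "cg_loop 0 g H eps delta zeta y r p = (y, INT_MAX)"
| "cg_loop (Suc f) g H eps delta zeta y r p =
     (let A = H + mat (2 * eps) in
      if p \<bullet> (A *v p) \<le> eps * (norm p)\<^sup>2 then (cg_boundary delta y p, BND_NEG)
      else
        (let \<alpha> = (norm r)\<^sup>2 / (p \<bullet> (A *v p));
             y' = y + \<alpha> *\<^sub>R p in
         if norm y' \<ge> delta then (cg_boundary delta y p, BND_NORM)
         else
           (let r' = r + \<alpha> *\<^sub>R (A *v p) in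
            if norm r' \<le> zeta / 2 * min (norm g) (eps * norm y') then (y', INT_RES)
            else
              (let \<beta> = (norm r')\<^sup>2 / (norm r)\<^sup>2;
                   p' = - r' + \<beta> *\<^sub>R p in
               cg_loop f g H eps delta zeta y' r' p'))))"

definition algorithm2 :: "real^'n \<Rightarrow> real^'n^'n \<Rightarrow> real \<Rightarrow> real \<Rightarrow> real \<Rightarrow> nat
                           \<Rightarrow> (real^'n) \<times> cg_flag" where
  "algorithm2 g H eps delta zeta kmax = cg_loop kmax g H eps delta zeta 0 g (- g)"

end

theory Submission
  imports Defs
begin

lemma mat_mult: "mat c *v (x::real^'n) = c *\<^sub>R x"
proof -
  have "\<And>i. (\<Sum>j\<in>UNIV. (if i = j then c else 0) * x $ j) = c * x $ i"
  proof -
    fix i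
    have "(\<Sum>j\<in>UNIV. (if i = j then c else 0) * x $ j) = (\<Sum>j\<in>UNIV. (if i = j then c * x $ j else 0))"
      by (rule sum.cong) auto
    also have "\<dots> = c * x $ i" by simp
    finally show "(\<Sum>j\<in>UNIV. (if i = j then c else 0) * x $ j) = c * x $ i" .
  qed
  then show ?thesis by (simp add: vec_eq_iff matrix_vector_mult_def mat_def)
qed

lemma symm: assumes "transpose H = H" shows "(x::real^'n) \<bullet> ((H + mat c) *v y) = y \<bullet> ((H + mat c) *v x)"
proof -
  have "x \<bullet> ((H + mat c) *v y) = (transpose (H + mat c) *v x) \<bullet> y"
    by (simp add: dot_lmul_matrix[symmetric])
  also have "transpose (H + mat c) = H + mat c"
    using assms by (simp add: transpose_def mat_def vec_eq_iff)
  finally show ?thesis by (simp add: inner_commute)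
qed

fun cgS :: "real^'n^'n \<Rightarrow> real^'n \<Rightarrow> nat \<Rightarrow> (real^'n) \<times> (real^'n) \<times> (real^'n)" where
  "cgS A g 0 = (0, g, - g)"
| "cgS A g (Suc k) = (case cgS A g k of (y, r, p) \<Rightarrow>
     (let a = (norm r)\<^sup>2 / (p \<bullet> (A *v p)); y' = y + a *\<^sub>R p; r' = r + a *\<^sub>R (A *v p)
      in (y', r', - r' + ((norm r')\<^sup>2 / (norm r)\<^sup>2) *\<^sub>R p)))"

definition "Yv A g k = fst (cgS A g k)"
definition "Rv A g k = fst (snd (cgS A g k))"
definition "Pv A g k = snd (snd (cgS A g k))"
definition "alph A g k = (norm (Rv A g k))\<^sup>2 / (Pv A g k \<bullet> (A *v Pv A g k))"
definition "bet A g k = (norm (Rv A g (Suc k)))\<^sup>2 / (norm (Rv A g k))\<^sup>2"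

lemma Y0[simp]: "Yv A g 0 = 0" and R0[simp]: "Rv A g 0 = g" and P0[simp]: "Pv A g 0 = - g"
  by (simp_all add: Yv_def Rv_def Pv_def)

lemma Y_Suc: "Yv A g (Suc k) = Yv A g k + alph A g k *\<^sub>R Pv A g k"
  and R_Suc: "Rv A g (Suc k) = Rv A g k + alph A g k *\<^sub>R (A *v Pv A g k)"
  and P_Suc: "Pv A g (Suc k) = - Rv A g (Suc k) + bet A g k *\<^sub>R Pv A g k"
  by (simp_all add: Yv_def Rv_def Pv_def alph_def bet_def Let_def split: prod.split)

lemma q_exp:
  fixes A :: "real^'n^'n" and g y p :: "real^'n"
  assumes symA: "\<And>x y. x \<bullet> (A *v y) = y \<bullet> (A *v x)"
  shows "g \<bullet> (y + s *\<^sub>R p) + 1/2 * ((y + s *\<^sub>R p) \<bullet> (A *v (y + s *\<^sub>R p)))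
     = g \<bullet> y + 1/2 * (y \<bullet> (A *v y)) + s * ((g + A *v y) \<bullet> p) + 1/2 * s\<^sup>2 * (p \<bullet> (A *v p))"
proof -
  have "p \<bullet> (A *v y) = y \<bullet> (A *v p)" by (rule symA)
  then show ?thesis
    by (simp add: matrix_vector_right_distrib matrix_vector_mult_scaleR inner_add_left inner_add_right
        algebra_simps power2_eq_square inner_commute)
qed

lemma norm_exp: "(norm (y + s *\<^sub>R p))\<^sup>2 = (norm y)\<^sup>2 + 2 * s * (y \<bullet> p) + s\<^sup>2 * (norm (p::real^'n))\<^sup>2"
  apply (simp only: power2_norm_eq_inner)
  by (simp add: inner_add_left inner_add_right algebra_simps power2_eq_square inner_commute)

lemma bnd_exists:
  fixes y p :: "real^'n"
  assumes "norm y < delta" "p \<noteq> 0"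
  shows "\<exists>\<sigma>\<ge>0. norm (y + \<sigma> *\<^sub>R p) = delta"
proof -
  define b where "b = (delta + norm y) / norm p"
  have np: "norm p > 0" using assms by simp
  have "delta + norm y \<ge> 0" using assms(1) norm_ge_zero[of y] by linarith
  then have b0: "b \<ge> 0" using np unfolding b_def by simp
  have "norm (b *\<^sub>R p) = delta + norm y" using np b0 \<open>delta + norm y \<ge> 0\<close> by (simp add: b_def)
  moreover have "norm (b *\<^sub>R p) \<le> norm (y + b *\<^sub>R p) + norm y"
    using norm_triangle_ineq4[of "y + b *\<^sub>R p" y] by simp
  ultimately have hb: "delta \<le> norm (y + b *\<^sub>R p)" by simp
  have "continuous_on {0..b} (\<lambda>s. norm (y + s *\<^sub>R p))"
    by (intro continuous_intros)
  from IVT'[of "\<lambda>s. norm (y + s *\<^sub>R p)" 0 delta b, OF _ hb b0 this] assms(1)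
  show ?thesis by auto
qed


lemma alg_aux:
  fixes a x c n0 n1 :: real
  assumes "a * x = n1" "a * c = n0" "a > 0"
  shows "n0 * x = n1 * c"
proof -
  show ?thesis
    by (subst assms(2)[symmetric], subst assms(1)[symmetric]) (simp add: algebra_simps)
qed

locale cgl =
  fixes A :: "real^'n^'n" and g :: "real^'n"
  assumes symA: "\<And>x y. x \<bullet> (A *v y) = y \<bullet> (A *v x)"
begin

abbreviation "YY \<equiv> Yv A g"
abbreviation "RR \<equiv> Rv A g"
abbreviation "PP \<equiv> Pv A g"
abbreviation "al \<equiv> alph A g"
abbreviation "be \<equiv> bet A g"

definition "CC k = (\<forall>i<k. PP i \<bullet> (A *v PP i) > 0)"
definition "NZ k = (\<forall>i\<le>k. RR i \<noteq> 0)"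

lemma RY: "RR k = g + A *v YY k"
  by (induction k) (simp_all add: Y_Suc R_Suc matrix_vector_right_distrib matrix_vector_mult_scaleR algebra_simps)

lemma curv_alpha:
  assumes "PP k \<bullet> (A *v PP k) > 0"
  shows "al k * (PP k \<bullet> (A *v PP k)) = (norm (RR k))\<^sup>2" and "al k \<ge> 0"
  using assms by (simp_all add: alph_def)

lemma be_nonneg: "be k \<ge> 0" by (simp add: bet_def)

lemma R_as_P: "RR 0 = - PP 0" "RR (Suc i) = - PP (Suc i) + be i *\<^sub>R PP i"
  by (simp_all add: P_Suc)

lemma rp: "CC k \<Longrightarrow> RR k \<bullet> PP k = - (norm (RR k))\<^sup>2"
proof (induction k)
  case 0
  show ?case by (simp add: power2_norm_eq_inner)
next
  case (Suc k)
  then have Ck: "CC k" and pos: "PP k \<bullet> (A *v PP k) > 0" by (auto simp: CC_def)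
  have IH: "RR k \<bullet> PP k = - (norm (RR k))\<^sup>2" using Suc.IH Ck .
  have "RR (Suc k) \<bullet> PP k = RR k \<bullet> PP k + al k * (PP k \<bullet> (A *v PP k))"
    by (simp add: R_Suc inner_add_left inner_add_right inner_commute)
  then have z: "RR (Suc k) \<bullet> PP k = 0" using IH curv_alpha(1)[OF pos] by simp
  show ?case
    by (simp add: P_Suc[of A g k] inner_add_right inner_diff_right z power2_norm_eq_inner)
qed

lemma rp_next: "CC (Suc k) \<Longrightarrow> RR (Suc k) \<bullet> PP k = 0"
proof -
  assume a: "CC (Suc k)"
  then have Ck: "CC k" and pos: "PP k \<bullet> (A *v PP k) > 0" by (auto simp: CC_def)
  have "RR (Suc k) \<bullet> PP k = RR k \<bullet> PP k + al k * (PP k \<bullet> (A *v PP k))"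
    by (simp add: R_Suc inner_add_left inner_add_right inner_commute)
  then show ?thesis using rp[OF Ck] curv_alpha(1)[OF pos] by simp
qed

lemma orth: "CC k \<Longrightarrow> NZ k \<Longrightarrow> (\<forall>i<k. RR i \<bullet> RR k = 0 \<and> PP i \<bullet> (A *v PP k) = 0)"
proof (induction k)
  case 0
  show ?case by simp
next
  case (Suc k)
  then have Ck: "CC k" and pos: "PP k \<bullet> (A *v PP k) > 0" by (auto simp: CC_def)
  from Suc have NZk: "NZ k" by (auto simp: NZ_def)
  have IH: "\<forall>i<k. RR i \<bullet> RR k = 0 \<and> PP i \<bullet> (A *v PP k) = 0" using Suc.IH Ck NZk by blast
  have nzk: "RR k \<noteq> 0" using NZk by (simp add: NZ_def)
  have rA: "RR i \<bullet> (A *v PP k) = (if i = k then - (PP k \<bullet> (A *v PP k)) else 0)" if "i \<le> k" for i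
  proof (cases i)
    case 0
    then show ?thesis using IH that by (cases k) auto
  next
    case (Suc j)
    have "RR i \<bullet> (A *v PP k) = - (PP (Suc j) \<bullet> (A *v PP k)) + be j * (PP j \<bullet> (A *v PP k))"
      using Suc by (simp add: R_as_P(2)[of j] inner_add_left inner_diff_left)
    also have "PP j \<bullet> (A *v PP k) = 0" using IH Suc that by auto
    finally show ?thesis using IH Suc that by auto
  qed
  have part1: "RR i \<bullet> RR (Suc k) = 0" if "i < Suc k" for i
  proof -
    have "RR i \<bullet> RR (Suc k) = RR i \<bullet> RR k + al k * (RR i \<bullet> (A *v PP k))"
      by (simp add: R_Suc inner_add_right)
    also have "\<dots> = 0"
    proof (cases "i = k")
      case True
      then show ?thesis using rA[of k] curv_alpha(1)[OF pos] by (simp add: power2_norm_eq_inner)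
    next
      case False
      then show ?thesis using rA[of i] IH that by auto
    qed
    finally show ?thesis .
  qed
  have part2: "PP i \<bullet> (A *v PP (Suc k)) = 0" if "i < Suc k" for i
  proof -
    have posi: "PP i \<bullet> (A *v PP i) > 0" using Suc.prems that by (auto simp: CC_def)
    have nzi: "RR i \<noteq> 0" using NZk that by (simp add: NZ_def)
    have ali: "al i > 0" using posi nzi by (simp add: alph_def)
    have e1: "PP i \<bullet> (A *v PP (Suc k)) = - (RR (Suc k) \<bullet> (A *v PP i)) + be k * (PP i \<bullet> (A *v PP k))"
      using symA[of "PP i" "RR (Suc k)"]
      by (simp add: P_Suc[of A g k] matrix_vector_right_distrib matrix_vector_mult_scaleR inner_add_right matrix_vector_mult_diff_distrib inner_diff_right inner_commute)
    have e2: "al i * (RR (Suc k) \<bullet> (A *v PP i)) = RR (Suc k) \<bullet> RR (Suc i) - RR (Suc k) \<bullet> RR i"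
      by (simp add: R_Suc[of A g i] inner_add_right)
    show ?thesis
    proof (cases "i = k")
      case True
      have "al k * (RR (Suc k) \<bullet> (A *v PP k)) = (norm (RR (Suc k)))\<^sup>2"
        using e2 True part1[of k] by (simp add: power2_norm_eq_inner inner_commute)
      moreover have "al k * (PP k \<bullet> (A *v PP k)) = (norm (RR k))\<^sup>2" using curv_alpha(1)[OF pos] .
      moreover have "(norm (RR k))\<^sup>2 > 0" using nzk by simp
      ultimately have "RR (Suc k) \<bullet> (A *v PP k) = be k * (PP k \<bullet> (A *v PP k))"
        using ali True unfolding bet_def by (auto simp: field_simps intro: alg_aux)
      then show ?thesis using e1 True by simp
    next
      case False
      then have "i < k" using that by simp
      then have "RR (Suc k) \<bullet> RR (Suc i) = 0" "RR (Suc k) \<bullet> RR i = 0"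
        using part1[of "Suc i"] part1[of i] by (auto simp: inner_commute)
      then have "RR (Suc k) \<bullet> (A *v PP i) = 0" using e2 ali by simp
      then show ?thesis using e1 IH \<open>i < k\<close> by simp
    qed
  qed
  show ?case using part1 part2 by blast
qed

lemma rp_orth: "CC k \<Longrightarrow> NZ k \<Longrightarrow> i < k \<Longrightarrow> RR k \<bullet> PP i = 0"
proof (induction i)
  case 0
  then have "RR 0 \<bullet> RR k = 0" using orth[of k] by blast
  then show ?case by (simp add: inner_commute)
next
  case (Suc i)
  have "RR k \<bullet> PP (Suc i) = - (RR k \<bullet> RR (Suc i)) + be i * (RR k \<bullet> PP i)"
    by (simp add: P_Suc[of A g i] inner_add_right inner_diff_right)
  moreover have "RR (Suc i) \<bullet> RR k = 0" using Suc.prems orth[of k] by blast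
  ultimately show ?case using Suc by (simp add: inner_commute)
qed

lemma pp: "CC k \<Longrightarrow> NZ k \<Longrightarrow> i \<le> k \<Longrightarrow> PP i \<bullet> PP k \<ge> 0"
proof (induction k)
  case 0
  then show ?case by simp
next
  case (Suc k)
  show ?case
  proof (cases "i = Suc k")
    case True
    then show ?thesis by simp
  next
    case False
    then have ik: "i \<le> k" using Suc by simp
    have Ck: "CC k" using Suc by (auto simp: CC_def)
    have NZk: "NZ k" using Suc by (auto simp: NZ_def)
    have "PP i \<bullet> PP (Suc k) = - (RR (Suc k) \<bullet> PP i) + be k * (PP i \<bullet> PP k)"
      by (simp add: P_Suc[of A g k] inner_add_right inner_diff_right inner_commute)
    also have "RR (Suc k) \<bullet> PP i = 0" using rp_orth[of "Suc k" i] Suc ik by simp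
    finally show ?thesis using Suc.IH[OF Ck NZk ik] be_nonneg[of k] by simp
  qed
qed

lemma Ysum: "YY k = (\<Sum>i<k. al i *\<^sub>R PP i)"
  by (induction k) (simp_all add: Y_Suc)

lemma yp: "CC k \<Longrightarrow> NZ k \<Longrightarrow> YY k \<bullet> PP k \<ge> 0"
proof -
  assume a: "CC k" "NZ k"
  have "YY k \<bullet> PP k = (\<Sum>i<k. al i * (PP i \<bullet> PP k))"
    by (simp add: Ysum inner_sum_left)
  also have "\<dots> \<ge> 0"
  proof (rule sum_nonneg)
    fix i assume "i \<in> {..<k}"
    then have "i < k" by simp
    then have "al i \<ge> 0" using a curv_alpha(2)[of i] by (auto simp: CC_def)
    moreover have "PP i \<bullet> PP k \<ge> 0" using pp[OF a] \<open>i < k\<close> by simp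
    ultimately show "al i * (PP i \<bullet> PP k) \<ge> 0" by simp
  qed
  finally show ?thesis .
qed

lemma qstep: "g \<bullet> (YY k + s *\<^sub>R PP k) + 1/2 * ((YY k + s *\<^sub>R PP k) \<bullet> (A *v (YY k + s *\<^sub>R PP k)))
     = g \<bullet> YY k + 1/2 * (YY k \<bullet> (A *v YY k)) + s * (RR k \<bullet> PP k) + 1/2 * s\<^sup>2 * (PP k \<bullet> (A *v PP k))"
  using q_exp[OF symA, of g "YY k" s "PP k"] by (simp add: RY)

lemma qneg: "CC k \<Longrightarrow> g \<bullet> YY k + 1/2 * (YY k \<bullet> (A *v YY k)) \<le> 0"
proof (induction k)
  case 0
  then show ?case by simp
next
  case (Suc k)
  then have Ck: "CC k" and pos: "PP k \<bullet> (A *v PP k) > 0" by (auto simp: CC_def)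
  have e: "g \<bullet> YY (Suc k) + 1/2 * (YY (Suc k) \<bullet> (A *v YY (Suc k)))
      = g \<bullet> YY k + 1/2 * (YY k \<bullet> (A *v YY k)) + al k * (RR k \<bullet> PP k) + 1/2 * (al k)\<^sup>2 * (PP k \<bullet> (A *v PP k))"
    using qstep[of k "al k"] by (simp add: Y_Suc)
  have "1/2 * (al k)\<^sup>2 * (PP k \<bullet> (A *v PP k)) = 1/2 * al k * (norm (RR k))\<^sup>2"
    using curv_alpha(1)[OF pos] by (simp add: power2_eq_square)
  moreover have "al k * (norm (RR k))\<^sup>2 \<ge> 0" using curv_alpha(2)[OF pos] by simp
  ultimately show ?case using e rp[OF Ck] Suc.IH[OF Ck] by simp
qed


lemma bnd_neg:
  assumes C: "CC k" and N: "NZ k" and yd: "norm (YY k) < delta" and ep: "eps > 0"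
    and neg: "PP k \<bullet> (A *v PP k) \<le> eps * (norm (PP k))\<^sup>2"
  shows "let s = cg_boundary delta (YY k) (PP k) in g \<bullet> s + 1/2 * (s \<bullet> (A *v s)) \<le> 1/2 * eps * (norm s)\<^sup>2"
proof -
  have rpk: "RR k \<bullet> PP k = - (norm (RR k))\<^sup>2" using rp[OF C] .
  have "RR k \<noteq> 0" using N by (simp add: NZ_def)
  then have pnz: "PP k \<noteq> 0" using rpk by auto
  define \<sigma> where "\<sigma> = (SOME \<sigma>. \<sigma> \<ge> 0 \<and> norm (YY k + \<sigma> *\<^sub>R PP k) = delta)"
  have "\<sigma> \<ge> 0 \<and> norm (YY k + \<sigma> *\<^sub>R PP k) = delta"
    unfolding \<sigma>_def using someI_ex[OF bnd_exists[OF yd pnz]] .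
  then have s0: "\<sigma> \<ge> 0" by simp
  have sdef: "cg_boundary delta (YY k) (PP k) = YY k + \<sigma> *\<^sub>R PP k"
    by (simp add: cg_boundary_def \<sigma>_def)
  have q0: "g \<bullet> YY k + 1/2 * (YY k \<bullet> (A *v YY k)) \<le> 0" using qneg[OF C] .
  have yp0: "YY k \<bullet> PP k \<ge> 0" using yp[OF C N] .
  have t1: "\<sigma> * (RR k \<bullet> PP k) \<le> 0" using s0 rpk by (simp add: mult_nonneg_nonneg)
  have t2: "\<sigma>\<^sup>2 * (PP k \<bullet> (A *v PP k)) \<le> \<sigma>\<^sup>2 * (eps * (norm (PP k))\<^sup>2)"
    using neg by (simp add: mult_left_mono)
  have t3: "0 \<le> eps * (norm (YY k))\<^sup>2" using ep by simp
  have t4: "0 \<le> eps * (\<sigma> * (YY k \<bullet> PP k))" using ep s0 yp0 by simp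
  show ?thesis
    unfolding Let_def sdef qstep norm_exp
    using q0 t1 t2 t3 t4 by (simp add: algebra_simps)
qed

lemma bnd_norm:
  assumes C: "CC k" and N: "NZ k" and yd: "norm (YY k) < delta" and ep: "eps > 0"
    and pos: "PP k \<bullet> (A *v PP k) > 0" and big: "norm (YY (Suc k)) \<ge> delta"
  shows "let s = cg_boundary delta (YY k) (PP k) in g \<bullet> s + 1/2 * (s \<bullet> (A *v s)) \<le> 1/2 * eps * (norm s)\<^sup>2"
proof -
  have rpk: "RR k \<bullet> PP k = - (norm (RR k))\<^sup>2" using rp[OF C] .
  have "RR k \<noteq> 0" using N by (simp add: NZ_def)
  then have pnz: "PP k \<noteq> 0" using rpk by auto
  define \<sigma> where "\<sigma> = (SOME \<sigma>. \<sigma> \<ge> 0 \<and> norm (YY k + \<sigma> *\<^sub>R PP k) = delta)"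
  have "\<sigma> \<ge> 0 \<and> norm (YY k + \<sigma> *\<^sub>R PP k) = delta"
    unfolding \<sigma>_def using someI_ex[OF bnd_exists[OF yd pnz]] .
  then have s0: "\<sigma> \<ge> 0" and sn: "norm (YY k + \<sigma> *\<^sub>R PP k) = delta" by simp_all
  have sdef: "cg_boundary delta (YY k) (PP k) = YY k + \<sigma> *\<^sub>R PP k"
    by (simp add: cg_boundary_def \<sigma>_def)
  have q0: "g \<bullet> YY k + 1/2 * (YY k \<bullet> (A *v YY k)) \<le> 0" using qneg[OF C] .
  have yp0: "YY k \<bullet> PP k \<ge> 0" using yp[OF C N] .
  have a0: "al k \<ge> 0" using curv_alpha(2)[OF pos] .
  have aeq: "al k * (PP k \<bullet> (A *v PP k)) = (norm (RR k))\<^sup>2" using curv_alpha(1)[OF pos] .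
  have sa: "\<sigma> \<le> al k"
  proof (rule ccontr)
    assume "\<not> \<sigma> \<le> al k"
    then have lt: "al k < \<sigma>" by simp
    have d0: "delta > 0" using yd norm_ge_zero[of "YY k"] by linarith
    have "delta \<le> norm (YY k + al k *\<^sub>R PP k)" using big by (simp add: Y_Suc)
    then have "delta\<^sup>2 \<le> (norm (YY k + al k *\<^sub>R PP k))\<^sup>2" using d0 by (simp add: power_mono)
    also have "\<dots> = (norm (YY k))\<^sup>2 + 2 * al k * (YY k \<bullet> PP k) + (al k)\<^sup>2 * (norm (PP k))\<^sup>2"
      by (rule norm_exp)
    also have "\<dots> < (norm (YY k))\<^sup>2 + 2 * \<sigma> * (YY k \<bullet> PP k) + \<sigma>\<^sup>2 * (norm (PP k))\<^sup>2"
    proof -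
      have "2 * al k * (YY k \<bullet> PP k) \<le> 2 * \<sigma> * (YY k \<bullet> PP k)"
        using lt yp0 by (simp add: mult_right_mono)
      moreover have "(al k)\<^sup>2 < \<sigma>\<^sup>2" using lt a0 by (simp add: power_strict_mono)
      moreover have "(norm (PP k))\<^sup>2 > 0" using pnz by simp
      ultimately show ?thesis by (simp add: mult_strict_right_mono add_le_less_mono)
    qed
    also have "\<dots> = delta\<^sup>2" using sn norm_exp[of "YY k" \<sigma> "PP k"] by simp
    finally show False by simp
  qed
  have t1: "\<sigma>\<^sup>2 * (PP k \<bullet> (A *v PP k)) \<le> \<sigma> * (norm (RR k))\<^sup>2"
  proof -
    have "\<sigma> * (\<sigma> * (PP k \<bullet> (A *v PP k))) \<le> \<sigma> * (al k * (PP k \<bullet> (A *v PP k)))"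
      using sa s0 pos by (simp add: mult_left_mono mult_right_mono)
    then show ?thesis using aeq by (simp add: power2_eq_square mult.assoc)
  qed
  have t2: "0 \<le> \<sigma> * (norm (RR k))\<^sup>2" using s0 by simp
  have t3: "0 \<le> eps * (norm (YY k + \<sigma> *\<^sub>R PP k))\<^sup>2" using ep by simp
  show ?thesis
    unfolding Let_def sdef qstep
    using q0 t1 t2 t3 rpk by (simp add: algebra_simps)
qed

definition "good H eps delta j = (\<forall>i<j. PP i \<bullet> (A *v PP i) > eps * (norm (PP i))\<^sup>2
    \<and> norm (YY (Suc i)) < delta \<and> RR (Suc i) \<noteq> 0)"

lemma goodC:
  assumes "eps > 0" "good H eps delta j" shows "CC j"
  unfolding CC_def
proof (intro allI impI)
  fix i assume "i < j"
  then have "PP i \<bullet> (A *v PP i) > eps * (norm (PP i))\<^sup>2" using assms(2) by (auto simp: good_def)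
  moreover have "eps * (norm (PP i))\<^sup>2 \<ge> 0" using assms(1) by simp
  ultimately show "PP i \<bullet> (A *v PP i) > 0" by linarith
qed

lemma loop_eq:
  assumes Aeq: "A = H + mat (2 * eps)"
  shows "cg_loop (Suc f) g H eps delta zeta (YY j) (RR j) (PP j) =
    (if PP j \<bullet> (A *v PP j) \<le> eps * (norm (PP j))\<^sup>2 then (cg_boundary delta (YY j) (PP j), BND_NEG)
     else if norm (YY (Suc j)) \<ge> delta then (cg_boundary delta (YY j) (PP j), BND_NORM)
     else if norm (RR (Suc j)) \<le> zeta / 2 * min (norm g) (eps * norm (YY (Suc j))) then (YY (Suc j), INT_RES)
     else cg_loop f g H eps delta zeta (YY (Suc j)) (RR (Suc j)) (PP (Suc j)))"
  by (simp add: Let_def Y_Suc R_Suc P_Suc alph_def bet_def Aeq)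

lemma loop:
  assumes Aeq: "A = H + mat (2 * eps)" and ep: "eps > 0" and dp: "delta > 0" and gz: "g \<noteq> 0"
    and zp: "zeta > 0"
  shows "good H eps delta j \<Longrightarrow> (let s = fst (cg_loop f g H eps delta zeta (YY j) (RR j) (PP j))
     in g \<bullet> s + 1/2 * (s \<bullet> (A *v s)) \<le> 1/2 * eps * (norm s)\<^sup>2)"
proof (induction f arbitrary: j)
  case 0
  have C: "CC j" using "0" by (rule goodC[OF ep])
  have "0 \<le> eps * (norm (YY j))\<^sup>2" using ep by simp
  then show ?case using qneg[OF C] unfolding Let_def cg_loop.simps(1) fst_conv by linarith
next
  case (Suc f)
  have gd: "good H eps delta j" by fact
  have C: "CC j" using goodC[OF ep gd] .
  have N: "NZ j" unfolding NZ_def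
  proof (intro allI impI)
    fix i assume "i \<le> j"
    then show "RR i \<noteq> 0" using gd gz unfolding good_def by (cases i) auto
  qed
  have yd: "norm (YY j) < delta"
  proof (cases j)
    case 0 then show ?thesis using dp by simp
  next
    case (Suc j') then show ?thesis using gd unfolding good_def by auto
  qed
  show ?case
  proof (cases "PP j \<bullet> (A *v PP j) \<le> eps * (norm (PP j))\<^sup>2")
    case True
    then show ?thesis using bnd_neg[OF C N yd ep True] loop_eq[OF Aeq] by (simp add: Let_def)
  next
    case neg: False
    have pos: "PP j \<bullet> (A *v PP j) > 0"
      using neg ep by (meson less_le_trans not_le mult_nonneg_nonneg less_imp_le zero_le_power2)
    have C1: "CC (Suc j)" using C pos unfolding CC_def by (auto simp: less_Suc_eq)
    show ?thesis
    proof (cases "norm (YY (Suc j)) \<ge> delta")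
      case True
      then show ?thesis using bnd_norm[OF C N yd ep pos True] loop_eq[OF Aeq] neg by (simp add: Let_def)
    next
      case nb: False
      show ?thesis
      proof (cases "norm (RR (Suc j)) \<le> zeta / 2 * min (norm g) (eps * norm (YY (Suc j)))")
        case True
        have "fst (cg_loop (Suc f) g H eps delta zeta (YY j) (RR j) (PP j)) = YY (Suc j)"
          using loop_eq[OF Aeq, where f=f and j=j and delta=delta and zeta=zeta] neg nb True by simp
        moreover have "0 \<le> eps * (norm (YY (Suc j)))\<^sup>2" using ep by simp
        ultimately show ?thesis using qneg[OF C1] unfolding Let_def by simp
      next
        case False
        have "0 \<le> zeta / 2 * min (norm g) (eps * norm (YY (Suc j)))"
          using zp ep by simp
        then have "RR (Suc j) \<noteq> 0" using False by auto
        then have "good H eps delta (Suc j)" using gd neg nb unfolding good_def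
          by (auto simp: less_Suc_eq not_le)
        then show ?thesis using Suc.IH[of "Suc j"] loop_eq[OF Aeq] neg nb False by (simp add: Let_def)
      qed
    qed
  qed
qed

end

theorem lemma3p3:
  fixes g :: "real^'n" and H :: "real^'n^'n"
    and eps delta zeta :: real and kmax :: nat
  assumes "g \<noteq> 0"
    and "transpose H = H"
    and "eps > 0" and "delta > 0"
    and "0 < zeta" and "zeta < 1"
    and "kmax \<le> CARD('n)"
  shows "let s = fst (algorithm2 g H eps delta zeta kmax)
         in g \<bullet> s + 1/2 * (s \<bullet> (H *v s)) \<le> - 1/2 * eps * (norm s)\<^sup>2"
proof -
  interpret cgl "H + mat (2 * eps)" g
    by unfold_locales (rule symm[OF assms(2)])
  have gd: "good H eps delta 0" by (simp add: good_def)
  have L: "let s = fst (cg_loop kmax g H eps delta zeta (YY 0) (RR 0) (PP 0))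
     in g \<bullet> s + 1/2 * (s \<bullet> ((H + mat (2 * eps)) *v s)) \<le> 1/2 * eps * (norm s)\<^sup>2"
    using loop[OF refl assms(3) assms(4) assms(1) assms(5) gd] .
  define s where "s = fst (algorithm2 g H eps delta zeta kmax)"
  have "g \<bullet> s + 1/2 * (s \<bullet> ((H + mat (2 * eps)) *v s)) \<le> 1/2 * eps * (norm s)\<^sup>2"
    using L by (simp add: s_def algorithm2_def Let_def)
  moreover have "s \<bullet> ((H + mat (2 * eps)) *v s) = s \<bullet> (H *v s) + 2 * eps * (norm s)\<^sup>2"
    by (simp add: matrix_vector_mult_add_rdistrib mat_mult inner_add_right power2_norm_eq_inner)
  ultimately have "g \<bullet> s + 1/2 * (s \<bullet> (H *v s)) \<le> - 1/2 * eps * (norm s)\<^sup>2" by linarith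
  then show ?thesis unfolding s_def Let_def .
qed

end
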